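(* Let $S=\{f_1,\dots,f_n\}$ be a finite set of polynomials in $\mathbb{Q}[\alpha_1,\dots,\alpha_r]$ and let $\sigma$ be a permutation of $\{\alpha_1,\dots,\alpha_r\}$. If $S$ is compatibility graph reducible with respect to $\sigma$, then every subset $L\subseteq S$ is compatibility graph reducible with respect to $\sigma$.
   Context: A polynomial is called linear in a variable $x$ if its degree in $x$ is at most one (it may be constant in $x$). One reduction step. Let $T=\{f_1,\dots,f_m\}$ be a finite set of polynomials with rational coefficients, together with a graph $C$ on vertex set $T$ (its compatibility graph), and let $x$ be a variable. If some $f_i$ is not linear in $x$, the step is undefined. Otherwise write $f_i=g_ix+h_i$ with $g_i=\partial f_i/\partial x$ and $h_i=f_i|_{x=0}$. Let $S^1=\{g_i\}$, $S^2=\{h_i\}$, $S^3=\{g_ih_j-h_ig_j : i\neq j,\ f_if_j\in E(C)\}$, and let $T_{(x)}$ be the set of irreducible factors over $\mathbb{Q}$ of the polynomials in $S^1\cup S^2\cup S^3$. Each $q\in T_{(x)}$ receives a set of labels (2-element sets): the label $\{0,i\}$ if $q$ is an irreducible factor of $g_i$; the label $\{i,\infty\}$ if $q$ is an irreducible factor of $h_i$, and additionally the label $\{0,i\}$ if moreover $h_i=f_i$; the label $\{i,j\}$ if $q$ is an irreducible factor of $g_ih_j-h_ig_j\in S^3$. The new compatibility graph $C_{(x)}$ on vertex set $T_{(x)}$ has $qq'$ as an edge iff some label of $q$ and some label of $q'$ have nonempty intersection. Full reduction. Let $S\subseteq\mathbb{Q}[\alpha_1,\dots,\alpha_r]$ be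 finite and $\sigma$ a permutation of the variables; write $\sigma(i)$ for the $i$-th variable in the order. Let $(S_{[\sigma(1)]},C_{[\sigma(1)]})$ be the result of one reduction step with variable $\sigma(1)$ applied to $S$ with the complete graph as compatibility graph. For $k\ge 2$ define inductively $S_{[\sigma(1),\dots,\sigma(k)]}=\bigcap_{1\le i\le k} S_{[\sigma(1),\dots,\widehat{\sigma(i)},\dots,\sigma(k)](\sigma(i))}$, where the subscript $(\sigma(i))$ means one reduction step with variable $\sigma(i)$ applied to the set $S_{[\sigma(1),\dots,\widehat{\sigma(i)},\dots,\sigma(k)]}$ with its compatibility graph; in these intersections polynomials differing by a nonzero constant factor are identified. The compatibility graph $C_{[\sigma(1),\dots,\sigma(k)]}$ has $fg$ as an edge iff $fg$ is an edge of every $C_{[\sigma(1),\dots,\widehat{\sigma(i)},\dots,\sigma(k)](\sigma(i))}$. $S$ is compatibility graph reducible with respect to $\sigma$ if for all $1\le i\le r-1$ the set $S_{[\sigma(1),\dots,\sigma(i)]}$ is defined and all its polynomials are linear in $\sigma(i+1)$. *)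

theory Defs
  imports Complex_Main "HOL-Library.Poly_Mapping" "HOL-Computational_Algebra.Factorial_Ring"
begin

text \<open>A polynomial in the variables alpha_0, alpha_1, ... (variables are natural numbers) is a
  finitely supported map from monomials (exponent vectors nat =>0 nat) to rational coefficients.\<close>

type_synonym mpoly = "(nat \<Rightarrow>\<^sub>0 nat) \<Rightarrow>\<^sub>0 rat"

definition mvars :: "mpoly \<Rightarrow> nat set" where
  "mvars f = (\<Union>m\<in>Poly_Mapping.keys f. Poly_Mapping.keys m)"

definition linear_in :: "nat \<Rightarrow> mpoly \<Rightarrow> bool" where
  "linear_in x f \<longleftrightarrow> (\<forall>m\<in>Poly_Mapping.keys f. Poly_Mapping.lookup m x \<le> 1)"

lift_definition pdiff :: "nat \<Rightarrow> mpoly \<Rightarrow> mpoly" is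
  "\<lambda>x f m. of_nat (Poly_Mapping.lookup m x + 1) * Poly_Mapping.lookup f (m + Poly_Mapping.single x 1)"
proof -
  fix x :: nat and f :: mpoly
  let ?e = "Poly_Mapping.single x (1::nat)"
  have "{m. of_nat (Poly_Mapping.lookup m x + 1) * Poly_Mapping.lookup f (m + ?e) \<noteq> (0::rat)} \<subseteq> (\<lambda>k. k - ?e) ` Poly_Mapping.keys f"
  proof
    fix m assume "m \<in> {m. of_nat (Poly_Mapping.lookup m x + 1) * Poly_Mapping.lookup f (m + ?e) \<noteq> (0::rat)}"
    then have "m + ?e \<in> Poly_Mapping.keys f" by (simp add: in_keys_iff)
    moreover have "m = (m + ?e) - ?e" by simp
    ultimately show "m \<in> (\<lambda>k. k - ?e) ` Poly_Mapping.keys f" by (rule rev_image_eqI)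
  qed
  then show "finite {m. of_nat (Poly_Mapping.lookup m x + 1) * Poly_Mapping.lookup f (m + ?e) \<noteq> (0::rat)}"
    by (rule finite_surj[OF finite_keys])
qed

lift_definition subst0 :: "nat \<Rightarrow> mpoly \<Rightarrow> mpoly" is
  "\<lambda>x f m. if Poly_Mapping.lookup m x = 0 then Poly_Mapping.lookup f m else 0"
proof -
  fix x :: nat and f :: mpoly
  have "{m. (if Poly_Mapping.lookup m x = 0 then Poly_Mapping.lookup f m else 0) \<noteq> (0::rat)} \<subseteq> Poly_Mapping.keys f"
    by (auto simp: in_keys_iff split: if_splits)
  then show "finite {m. (if Poly_Mapping.lookup m x = 0 then Poly_Mapping.lookup f m else 0) \<noteq> (0::rat)}"
    by (rule finite_subset[OF _ finite_keys])
qed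

text \<open>Canonical representative of the class of a nonzero polynomial modulo nonzero
  rational constants: divide by the coefficient of the largest monomial.  This realises
  the identification of polynomials differing by a nonzero constant factor.\<close>
definition normp :: "mpoly \<Rightarrow> mpoly" where
  "normp f = Poly_Mapping.single 0 (inverse (Poly_Mapping.lookup f (Max (Poly_Mapping.keys f)))) * f"

definition irr_factors :: "mpoly \<Rightarrow> mpoly set" where
  "irr_factors p = {normp q | q. p \<noteq> 0 \<and> irreducible q \<and> q dvd p}"

text \<open>A polynomial set with compatibility graph: vertex set T and edge relation E
  (symmetric; only pairs of distinct vertices of T are relevant).\<close>
type_synonym pset = "mpoly set \<times> (mpoly \<times> mpoly) set"

datatype lab = LZero | LInf | LIdx mpoly

definition complete_graph :: "mpoly set \<Rightarrow> (mpoly \<times> mpoly) set" where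
  "complete_graph S = {(f, g). f \<in> S \<and> g \<in> S \<and> f \<noteq> g}"

definition S3 :: "nat \<Rightarrow> pset \<Rightarrow> mpoly set" where
  "S3 x TC = {pdiff x fi * subst0 x fj - subst0 x fi * pdiff x fj | fi fj.
      fi \<in> fst TC \<and> fj \<in> fst TC \<and> fi \<noteq> fj \<and> (fi, fj) \<in> snd TC}"

definition step_vertices :: "nat \<Rightarrow> pset \<Rightarrow> mpoly set" where
  "step_vertices x TC = \<Union> (irr_factors ` ((pdiff x ` fst TC) \<union> (subst0 x ` fst TC) \<union> S3 x TC))"

text \<open>labels of q; indices of the polynomials of T are the polynomials themselves\<close>
definition labels :: "nat \<Rightarrow> pset \<Rightarrow> mpoly \<Rightarrow> lab set set" where
  "labels x TC q =
     {{LZero, LIdx fi} | fi. fi \<in> fst TC \<and> q \<in> irr_factors (pdiff x fi)}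
   \<union> {{LIdx fi, LInf} | fi. fi \<in> fst TC \<and> q \<in> irr_factors (subst0 x fi)}
   \<union> {{LZero, LIdx fi} | fi. fi \<in> fst TC \<and> q \<in> irr_factors (subst0 x fi) \<and> subst0 x fi = fi}
   \<union> {{LIdx fi, LIdx fj} | fi fj. fi \<in> fst TC \<and> fj \<in> fst TC \<and> fi \<noteq> fj \<and> (fi, fj) \<in> snd TC
        \<and> q \<in> irr_factors (pdiff x fi * subst0 x fj - subst0 x fi * pdiff x fj)}"

definition step_edges :: "nat \<Rightarrow> pset \<Rightarrow> (mpoly \<times> mpoly) set" where
  "step_edges x TC = {(q, q'). q \<in> step_vertices x TC \<and> q' \<in> step_vertices x TC \<and> q \<noteq> q'
      \<and> (\<exists>l\<in>labels x TC q. \<exists>l'\<in>labels x TC q'. l \<inter> l' \<noteq> {})}"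

text \<open>one reduction step; None = undefined\<close>
definition red_step :: "nat \<Rightarrow> pset \<Rightarrow> pset option" where
  "red_step x TC = (if \<exists>f\<in>fst TC. \<not> linear_in x f then None
                    else Some (step_vertices x TC, step_edges x TC))"

definition del_nth :: "nat \<Rightarrow> 'a list \<Rightarrow> 'a list" where
  "del_nth i xs = take i xs @ drop (Suc i) xs"

definition combine :: "pset option list \<Rightarrow> pset option" where
  "combine rs = (if None \<in> set rs then None
     else Some (\<Inter> {fst (the r) | r. r \<in> set rs}, \<Inter> {snd (the r) | r. r \<in> set rs}))"

text \<open>red S n vs computes S_[vs] when length vs = n (n >= 1)\<close>
fun red :: "mpoly set \<Rightarrow> nat \<Rightarrow> nat list \<Rightarrow> pset option" where
  "red S 0 vs = None"
| "red S (Suc 0) vs = red_step (hd vs) (S, complete_graph S)"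
| "red S (Suc (Suc n)) vs =
     combine (map (\<lambda>i. Option.bind (red S (Suc n) (del_nth i vs)) (red_step (vs ! i)))
                  [0..<length vs])"

definition reduction :: "mpoly set \<Rightarrow> nat list \<Rightarrow> pset option" where
  "reduction S vs = red S (length vs) vs"

text \<open>sigma is a permutation of the variables 0..r-1, given as the list
  [sigma(1), ..., sigma(r)] (0-based: sigma ! 0 = sigma(1)).\<close>
definition is_var_perm :: "nat \<Rightarrow> nat list \<Rightarrow> bool" where
  "is_var_perm r \<sigma> \<longleftrightarrow> length \<sigma> = r \<and> distinct \<sigma> \<and> set \<sigma> = {..<r}"

definition cg_reducible :: "mpoly set \<Rightarrow> nat list \<Rightarrow> bool" where
  "cg_reducible S \<sigma> \<longleftrightarrow>
     (\<forall>i. 1 \<le> i \<and> i \<le> length \<sigma> - 1 \<longrightarrow>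
        (\<exists>TC. reduction S (take i \<sigma>) = Some TC \<and> (\<forall>f\<in>fst TC. linear_in (\<sigma> ! i) f)))"

end

theory Submission
  imports Defs
begin

definition ple :: "pset \<Rightarrow> pset \<Rightarrow> bool" where
  "ple P Q \<longleftrightarrow> fst P \<subseteq> fst Q \<and> snd P \<subseteq> snd Q"

lemma S3_mono: "ple P Q \<Longrightarrow> S3 x P \<subseteq> S3 x Q"
  unfolding S3_def ple_def by blast

lemma sv_mono: "ple P Q \<Longrightarrow> step_vertices x P \<subseteq> step_vertices x Q"
  using S3_mono[of P Q x] unfolding step_vertices_def ple_def by blast

lemma labels_mono: "ple P Q \<Longrightarrow> labels x P q \<subseteq> labels x Q q"
  unfolding labels_def ple_def by blast

lemma se_mono: "ple P Q \<Longrightarrow> step_edges x P \<subseteq> step_edges x Q"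
  using sv_mono[of P Q x] labels_mono[of P Q x] unfolding step_edges_def by blast

lemma red_step_mono:
  assumes "red_step x Q = Some B" "ple P Q"
  shows "\<exists>A. red_step x P = Some A \<and> ple A B"
proof -
  have "\<forall>f\<in>fst Q. linear_in x f" using assms(1) unfolding red_step_def by (auto split: if_splits)
  hence "\<forall>f\<in>fst P. linear_in x f" using assms(2) unfolding ple_def by blast
  thus ?thesis using assms sv_mono[OF assms(2), of x] se_mono[OF assms(2), of x]
    unfolding red_step_def by (auto simp: ple_def split: if_splits)
qed

lemma combine_eq: "combine rs = (if None \<in> set rs then None
     else Some (\<Inter> ((\<lambda>r. fst (the r)) ` set rs), \<Inter> ((\<lambda>r. snd (the r)) ` set rs)))"
  unfolding combine_def by (simp only: Setcompr_eq_image)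

lemma combine_mono:
  assumes "list_all2 (\<lambda>a b. \<forall>B. b = Some B \<longrightarrow> (\<exists>A. a = Some A \<and> ple A B)) as bs"
    and "combine bs = Some Q"
  shows "\<exists>P. combine as = Some P \<and> ple P Q"
proof -
  have len: "length as = length bs" using assms(1) list_all2_lengthD by blast
  have nb: "None \<notin> set bs" using assms(2) unfolding combine_eq by (auto split: if_splits)
  have pw: "as ! i \<noteq> None \<and> ple (the (as ! i)) (the (bs ! i))" if i: "i < length bs" for i
  proof -
    have "bs ! i \<in> set bs" using i by simp
    hence "bs ! i \<noteq> None" using nb by metis
    then obtain B where B: "bs ! i = Some B" by blast
    have "\<forall>B. bs ! i = Some B \<longrightarrow> (\<exists>A. as ! i = Some A \<and> ple A B)"
      using list_all2_nthD[OF assms(1), of i] i len by simp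
    with B show ?thesis by auto
  qed
  have na: "None \<notin> set as"
  proof
    assume "None \<in> set as"
    then obtain i where i: "i < length as" "as ! i = None" by (metis in_set_conv_nth)
    have "i < length bs" using i len by simp
    from pw[OF this] i(2) show False by simp
  qed
  have Q: "Q = (\<Inter> ((\<lambda>r. fst (the r)) ` set bs), \<Inter> ((\<lambda>r. snd (the r)) ` set bs))"
    using assms(2) nb unfolding combine_eq by auto
  have f: "\<Inter> ((\<lambda>r. fst (the r)) ` set as) \<subseteq> \<Inter> ((\<lambda>r. fst (the r)) ` set bs)"
  proof (rule subsetI, rule InterI)
    fix x X assume x: "x \<in> \<Inter> ((\<lambda>r. fst (the r)) ` set as)" and X: "X \<in> (\<lambda>r. fst (the r)) ` set bs"
    then obtain r where r: "r \<in> set bs" "X = fst (the r)" by blast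
    then obtain i where i: "i < length bs" "r = bs ! i" by (metis in_set_conv_nth)
    have "as ! i \<in> set as" using i len by simp
    hence "x \<in> fst (the (as ! i))" by (rule INT_D[OF x])
    moreover have "fst (the (as ! i)) \<subseteq> X" using pw[OF i(1)] i r unfolding ple_def by simp
    ultimately show "x \<in> X" by (rule subsetD[rotated])
  qed
  have s: "\<Inter> ((\<lambda>r. snd (the r)) ` set as) \<subseteq> \<Inter> ((\<lambda>r. snd (the r)) ` set bs)"
  proof (rule subsetI, rule InterI)
    fix x X assume x: "x \<in> \<Inter> ((\<lambda>r. snd (the r)) ` set as)" and X: "X \<in> (\<lambda>r. snd (the r)) ` set bs"
    then obtain r where r: "r \<in> set bs" "X = snd (the r)" by blast
    then obtain i where i: "i < length bs" "r = bs ! i" by (metis in_set_conv_nth)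
    have "as ! i \<in> set as" using i len by simp
    hence "x \<in> snd (the (as ! i))" by (rule INT_D[OF x])
    moreover have "snd (the (as ! i)) \<subseteq> X" using pw[OF i(1)] i r unfolding ple_def by simp
    ultimately show "x \<in> X" by (rule subsetD[rotated])
  qed
  have "combine as = Some (\<Inter> ((\<lambda>r. fst (the r)) ` set as), \<Inter> ((\<lambda>r. snd (the r)) ` set as))"
    using na unfolding combine_eq by simp
  thus ?thesis using f s Q unfolding ple_def by simp
qed

lemma red_mono:
  "L \<subseteq> S \<Longrightarrow> red S n vs = Some Q \<Longrightarrow> \<exists>P. red L n vs = Some P \<and> ple P Q"
proof (induction S n vs arbitrary: Q rule: red.induct)
  case (1 S vs) then show ?case by simp
next
  case (2 S vs)
  have "ple (L, complete_graph L) (S, complete_graph S)"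
    using 2 unfolding ple_def complete_graph_def by auto
  then show ?case using 2 red_step_mono by simp
next
  case (3 S n vs)
  let ?g = "\<lambda>T i. Option.bind (red T (Suc n) (del_nth i vs)) (red_step (vs ! i))"
  have "list_all2 (\<lambda>a b. \<forall>B. b = Some B \<longrightarrow> (\<exists>A. a = Some A \<and> ple A B))
          (map (?g L) [0..<length vs]) (map (?g S) [0..<length vs])"
  proof (rule list_all2_all_nthI)
    fix i assume "i < length (map (?g L) [0..<length vs])"
    hence i: "i < length vs" by simp
    show "\<forall>B. map (?g S) [0..<length vs] ! i = Some B \<longrightarrow>
           (\<exists>A. map (?g L) [0..<length vs] ! i = Some A \<and> ple A B)"
    proof (intro allI impI)
      fix B assume "map (?g S) [0..<length vs] ! i = Some B"
      hence "?g S i = Some B" using i by simp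
      then obtain C where C: "red S (Suc n) (del_nth i vs) = Some C" "red_step (vs ! i) C = Some B"
        by (cases "red S (Suc n) (del_nth i vs)") auto
      have ii: "i \<in> set [0..<length vs]" using i by simp
      from "3.IH"[OF ii \<open>L \<subseteq> S\<close> C(1)] obtain D where
        D: "red L (Suc n) (del_nth i vs) = Some D" "ple D C" by auto
      from red_step_mono[OF C(2) D(2)] obtain A where "red_step (vs ! i) D = Some A" "ple A B" by blast
      thus "\<exists>A. map (?g L) [0..<length vs] ! i = Some A \<and> ple A B" using D i by auto
    qed
  qed simp
  then show ?case using combine_mono "3.prems"(2) by simp
qed

theorem lemma3p2:
  fixes S :: "mpoly set" and r :: nat and \<sigma> :: "nat list"
  assumes "finite S"
    and "\<forall>f\<in>S. mvars f \<subseteq> {..<r}"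
    and "is_var_perm r \<sigma>"
    and "cg_reducible S \<sigma>"
  shows "\<forall>L. L \<subseteq> S \<longrightarrow> cg_reducible L \<sigma>"
proof (intro allI impI)
  fix L assume L: "L \<subseteq> S"
  show "cg_reducible L \<sigma>" unfolding cg_reducible_def
  proof (intro allI impI)
    fix i assume i: "1 \<le> i \<and> i \<le> length \<sigma> - 1"
    then obtain TC where TC: "reduction S (take i \<sigma>) = Some TC" "\<forall>f\<in>fst TC. linear_in (\<sigma> ! i) f"
      using assms(4) unfolding cg_reducible_def by blast
    from red_mono[OF L TC(1)[unfolded reduction_def]] obtain P where
      "red L (length (take i \<sigma>)) (take i \<sigma>) = Some P" "ple P TC" by blast
    thus "\<exists>TC. reduction L (take i \<sigma>) = Some TC \<and> (\<forall>f\<in>fst TC. linear_in (\<sigma> ! i) f)"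
      using TC(2) unfolding reduction_def ple_def by blast
  qed
qed

end
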